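(* Fix $a,g>0$ and let $\rho_0\in C^\infty(\mathbb{T})$. Suppose $\rho_1,\rho_2$ are solutions in $C^\infty(\mathbb{T})$ (i.e. $\rho_i(\cdot,t)\in C^\infty(\mathbb{T})$ for each $t$) of \[ \partial_t \rho + g\,(H_a\rho)\,\partial_x \rho = 0,\qquad \rho(\cdot,0)=\rho_0, \] on a common time interval $[0,T)$. Then $\rho_1=\rho_2$ on $[0,T)$.
   Context: $\mathbb{T}=[-\pi,\pi)$ is the circle; functions on $\mathbb{T}$ are identified with $2\pi$-periodic functions on $\mathbb{R}$, and $C^\infty(\mathbb{T})$ denotes smooth $2\pi$-periodic functions with all derivatives bounded. For $a>0$, $H_a f(x) := \mathrm{P.V.}\int_{\mathbb{R}} f(x-y)K_a(y)\,dy$ with $K_a(y) := \frac{a^2}{\pi y(y^2+a^2)}$, applied to the periodic extension of $f$. *)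

theory Defs
  imports "HOL-Analysis.Analysis"
begin

text \<open>Smooth 2pi-periodic functions with all derivatives bounded (C-infinity of the circle).\<close>
definition smooth_periodic :: "(real \<Rightarrow> real) \<Rightarrow> bool" where
  "smooth_periodic f \<longleftrightarrow>
     (\<forall>x. f (x + 2 * pi) = f x) \<and>
     (\<forall>k. \<forall>x. (deriv ^^ k) f differentiable (at x)) \<and>
     (\<forall>k. bounded (range ((deriv ^^ k) f)))"

definition kernel_a :: "real \<Rightarrow> real \<Rightarrow> real" where
  "kernel_a a y = a\<^sup>2 / (pi * y * (y\<^sup>2 + a\<^sup>2))"

definition hilbert_a :: "real \<Rightarrow> (real \<Rightarrow> real) \<Rightarrow> real \<Rightarrow> real" where
  "hilbert_a a f x =
     Lim (at_right 0) (\<lambda>\<epsilon>. integral {y. \<epsilon> \<le> \<bar>y\<bar>} (\<lambda>y. f (x - y) * kernel_a a y))"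

definition is_solution ::
  "real \<Rightarrow> real \<Rightarrow> real \<Rightarrow> (real \<Rightarrow> real) \<Rightarrow> (real \<Rightarrow> real \<Rightarrow> real) \<Rightarrow> bool" where
  "is_solution a g T rho0 rho \<longleftrightarrow>
     (\<forall>t\<in>{0..<T}. smooth_periodic (\<lambda>x. rho x t)) \<and>
     (\<forall>k. continuous_on (UNIV \<times> {0..<T}) (\<lambda>(x, t). (deriv ^^ k) (\<lambda>y. rho y t) x)) \<and>
     (\<forall>x. rho x 0 = rho0 x) \<and>
     (\<exists>rho_t. continuous_on (UNIV \<times> {0..<T}) (\<lambda>(x, t). rho_t x t) \<and>
        (\<forall>x. \<forall>t\<in>{0..<T}.
           ((\<lambda>s. rho x s) has_real_derivative rho_t x t) (at t within {0..<T}) \<and>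
           rho_t x t + g * hilbert_a a (\<lambda>y. rho y t) x * deriv (\<lambda>y. rho y t) x = 0))"

end

theory Submission
  imports Defs
begin


definition mk :: "real \<Rightarrow> real \<Rightarrow> real" where
  "mk a y = a\<^sup>2 / (pi * (y\<^sup>2 + a\<^sup>2))"

lemma mk_nonneg: "mk a y \<ge> 0"
  unfolding mk_def by (simp add: add_nonneg_nonneg)

lemma mk_le: "a \<noteq> 0 \<Longrightarrow> mk a y \<le> 1 / pi"
  unfolding mk_def by (simp add: field_simps add_pos_nonneg)

lemma mk_cont[continuous_intros]: "a \<noteq> 0 \<Longrightarrow> continuous_on S (mk a)"
  unfolding mk_def by (intro continuous_intros) (auto simp: add_pos_nonneg)

lemma mk_deriv:
  assumes "a > 0"
  shows "((\<lambda>y. (a/pi) * arctan (y/a)) has_real_derivative mk a y) (at y within S)"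
proof -
  have "((\<lambda>y. (a/pi) * arctan (y/a)) has_real_derivative (a/pi) * (inverse (1 + (y/a)\<^sup>2) * (1/a))) (at y within S)"
    using assms by (intro derivative_eq_intros) auto
  moreover have "(a/pi) * (inverse (1 + (y/a)\<^sup>2) * (1/a)) = mk a y"
    using assms unfolding mk_def by (simp add: field_simps power2_eq_square)
  ultimately show ?thesis by simp
qed

lemma mk_has_integral:
  assumes "a > 0" "c \<le> d"
  shows "(mk a has_integral ((a/pi) * arctan (d/a) - (a/pi) * arctan (c/a))) {c..d}"
proof (rule fundamental_theorem_of_calculus)
  show "c \<le> d" by fact
  show "((\<lambda>y. (a/pi) * arctan (y/a)) has_vector_derivative mk a x) (at x within {c..d})" for x
    unfolding has_real_derivative_iff_has_vector_derivative[symmetric] using mk_deriv[OF assms(1)] by blast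
qed

lemma mk_has_integral_inf:
  assumes "a > 0"
  shows "(mk a has_integral (a/2 - (a/pi) * arctan (c/a))) {c..}"
proof (rule has_integral_to_inf)
  show "mk a integrable_on {c..y}" for y
    using assms by (intro integrable_continuous_interval continuous_intros) auto
  show "mk a y \<ge> 0" for y by (rule mk_nonneg)
  have ev: "\<forall>\<^sub>F y in at_top. integral {c..y} (mk a) = (a/pi) * arctan (y/a) - (a/pi) * arctan (c/a)"
    using eventually_ge_at_top[of c] by eventually_elim (use mk_has_integral assms in blast)
  have lim: "((\<lambda>y. (a/pi) * arctan (y/a) - (a/pi) * arctan (c/a)) \<longlongrightarrow> a/2 - (a/pi) * arctan (c/a)) at_top"
  proof -
    have "((\<lambda>y. arctan (y/a)) \<longlongrightarrow> pi/2) at_top"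
    proof (rule filterlim_compose[OF tendsto_arctan_at_top])
      have "filterlim (\<lambda>y. (1/a) * y) at_top at_top"
        by (rule filterlim_tendsto_pos_mult_at_top[OF tendsto_const[of "1/a"] _ filterlim_ident]) (use assms in auto)
      then show "filterlim (\<lambda>y. y/a) at_top at_top" by simp
    qed
    then have "((\<lambda>y. (a/pi) * arctan (y/a) - (a/pi) * arctan (c/a)) \<longlongrightarrow> (a/pi)*(pi/2) - (a/pi) * arctan (c/a)) at_top"
      by (intro tendsto_intros)
    then show ?thesis by simp
  qed
  show "((\<lambda>y. integral {c..y} (mk a)) \<longlongrightarrow> a/2 - (a/pi) * arctan (c/a)) at_top"
    using lim tendsto_cong[OF ev] by blast
qed

lemma mk_integral_le:
  assumes "a > 0" "0 \<le> c" "c \<le> d"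
  shows "integral {c..d} (mk a) \<le> a/2"
proof -
  have "integral {c..d} (mk a) = (a/pi) * arctan (d/a) - (a/pi) * arctan (c/a)"
    using mk_has_integral[OF assms(1,3)] by (rule integral_unique)
  moreover have "arctan (d/a) \<le> pi/2" using arctan_ubound[of "d/a"] by simp
  moreover have "arctan (c/a) \<ge> 0" using assms by (simp add: arctan_le_zero_iff zero_le_arctan_iff)
  ultimately have "integral {c..d} (mk a) \<le> (a/pi) * (pi/2)"
  proof -
    have "(a/pi) * arctan (d/a) \<le> (a/pi) * (pi/2)"
      using \<open>arctan (d/a) \<le> pi/2\<close> assms by (intro mult_left_mono) auto
    moreover have "(a/pi) * arctan (c/a) \<ge> 0"
      using \<open>arctan (c/a) \<ge> 0\<close> assms by simp
    ultimately show ?thesis using \<open>integral {c..d} (mk a) = _\<close> by linarith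
  qed
  then show ?thesis by simp
qed



definition Qf :: "real \<Rightarrow> (real \<Rightarrow> real) \<Rightarrow> real \<Rightarrow> real \<Rightarrow> real" where
  "Qf a f x y = (f (x - y) - f (x + y)) * kernel_a a y"

lemma kernel_mk: "y > 0 \<Longrightarrow> kernel_a a y = mk a y / y"
  unfolding kernel_a_def mk_def by (simp add: field_simps)

lemma kernel_neg: "kernel_a a (-y) = - kernel_a a y"
  unfolding kernel_a_def by simp

lemma kernel_nonneg: "y > 0 \<Longrightarrow> kernel_a a y \<ge> 0"
  unfolding kernel_a_def by (simp add: add_nonneg_nonneg)

lemma kernel_cont: "0 \<notin> S \<Longrightarrow> a \<noteq> 0 \<Longrightarrow> continuous_on S (kernel_a a)"
  unfolding kernel_a_def
  by (intro continuous_intros) (auto simp: add_pos_nonneg)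

lemma abs_int_bound:
  fixes f :: "real \<Rightarrow> real"
  assumes "continuous_on S f" "S \<in> sets lebesgue" "g integrable_on S"
    "\<And>x. x \<in> S \<Longrightarrow> norm (f x) \<le> g x"
  shows "f absolutely_integrable_on S"
  by (rule measurable_bounded_by_integrable_imp_absolutely_integrable
        [OF continuous_imp_measurable_on_sets_lebesgue[OF assms(1,2)] assms(2,3,4)])

lemma mk_integrable_atLeast: "a > 0 \<Longrightarrow> mk a integrable_on {c..}"
  using mk_has_integral_inf by blast

lemma mk_has_integral_pos: 
  assumes "a > 0" shows "(mk a has_integral a/2) {0<..}"
proof -
  have "(mk a has_integral a/2) {0..}"
    using mk_has_integral_inf[OF assms, of 0] by simp
  moreover have "negligible {x \<in> {0..} - {0<..}. mk a x \<noteq> 0}"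
    by (rule negligible_subset[of "{0}"]) auto
  moreover have "{x \<in> {0<..} - {0..}. mk a x \<noteq> (0::real)} = {}"
    by auto
  then have "negligible {x \<in> {0<..} - {0..}. mk a x \<noteq> (0::real)}"
    by (metis negligible_empty)
  ultimately show ?thesis using has_integral_spike_set_eq by blast
qed

lemma Q_bound:
  assumes L: "\<And>s t. \<bar>f s - f t\<bar> \<le> L * \<bar>s - t\<bar>" and y: "y > 0"
  shows "\<bar>Qf a f x y\<bar> \<le> 2 * L * mk a y"
proof -
  have "\<bar>f (x - y) - f (x + y)\<bar> \<le> L * (2 * y)" using L[of "x - y" "x + y"] y by simp
  moreover have "kernel_a a y \<ge> 0" using kernel_nonneg[OF y] .
  ultimately have "\<bar>Qf a f x y\<bar> \<le> L * (2 * y) * kernel_a a y"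
    unfolding Qf_def by (simp add: abs_mult mult_right_mono)
  also have "\<dots> = 2 * L * mk a y" using y by (simp add: kernel_mk)
  finally show ?thesis .
qed

lemma Q_cont2:
  assumes "continuous_on UNIV f" "a \<noteq> 0" "0 \<notin> S"
  shows "continuous_on (UNIV \<times> S) (\<lambda>(x, y). Qf a f x y)"
proof -
  have k: "continuous_on (UNIV \<times> S) (\<lambda>p. kernel_a a (snd p))"
    by (intro continuous_on_compose2[OF kernel_cont[OF assms(3,2)]] continuous_intros) auto
  have f1: "continuous_on (UNIV \<times> S) (\<lambda>p. f (fst p - snd p))"
    by (intro continuous_on_compose2[OF assms(1)] continuous_intros) auto
  have f2: "continuous_on (UNIV \<times> S) (\<lambda>p. f (fst p + snd p))"
    by (intro continuous_on_compose2[OF assms(1)] continuous_intros) auto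
  have "continuous_on (UNIV \<times> S) (\<lambda>p. (f (fst p - snd p) - f (fst p + snd p)) * kernel_a a (snd p))"
    by (intro continuous_intros f1 f2 k)
  then show ?thesis unfolding Qf_def by (simp add: case_prod_beta)
qed

lemma Q_cont:
  assumes "continuous_on UNIV f" "a \<noteq> 0" "0 \<notin> S"
  shows "continuous_on S (Qf a f x)"
proof -
  have "continuous_on S (\<lambda>y. (\<lambda>(x, y). Qf a f x y) (x, y))"
    by (intro continuous_on_compose2[OF Q_cont2[OF assms]] continuous_intros) auto
  then show ?thesis by simp
qed

lemma Q_absint:
  assumes "a > 0" "continuous_on UNIV f" "\<And>s t. \<bar>f s - f t\<bar> \<le> L * \<bar>s - t\<bar>"
  shows "Qf a f x absolutely_integrable_on {0<..}"
proof (rule abs_int_bound)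
  show "continuous_on {0<..} (Qf a f x)" using assms by (intro Q_cont) auto
  show "(\<lambda>y. 2 * L * mk a y) integrable_on {0<..}"
    using mk_has_integral_pos[OF assms(1)] by (intro integrable_on_mult_right) blast
  show "norm (Qf a f x y) \<le> 2 * L * mk a y" if "y \<in> {0<..}" for y
    using Q_bound[OF assms(3)] that by simp
qed auto

lemma hilbert_eq:
  assumes a: "a > 0" and fc: "continuous_on UNIV f" and B: "\<And>s. \<bar>f s\<bar> \<le> B"
    and L: "\<And>s t. \<bar>f s - f t\<bar> \<le> L * \<bar>s - t\<bar>"
  shows "hilbert_a a f x = integral {0<..} (Qf a f x)"
proof -
  define g where "g = (\<lambda>y. f (x - y) * kernel_a a y)"
  define I where "I = integral {0<..} (Qf a f x)"
  have QI: "Qf a f x absolutely_integrable_on {0<..}" by (rule Q_absint[OF a fc L])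
  have E: "integral {y. \<epsilon> \<le> \<bar>y\<bar>} g = integral {\<epsilon>..} (Qf a f x)" if e: "\<epsilon> > 0" for \<epsilon>
  proof -
    have bnd: "\<bar>f z * kernel_a a y\<bar> \<le> (B / \<epsilon>) * mk a y" if "y \<in> {\<epsilon>..}" for y z
    proof -
      have y: "y > 0" "y \<ge> \<epsilon>" using that e by auto
      have "\<bar>f z * kernel_a a y\<bar> = \<bar>f z\<bar> * (mk a y / y)"
        using y by (simp add: abs_mult kernel_mk mk_nonneg)
      also have "\<dots> \<le> B * (mk a y / \<epsilon>)"
        using y B[of z] e by (intro mult_mono divide_left_mono) (auto simp: mk_nonneg)
      finally show ?thesis by simp
    qed
    have mkI: "(\<lambda>y. (B / \<epsilon>) * mk a y) integrable_on {\<epsilon>..}"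
      using mk_integrable_atLeast[OF a] by (intro integrable_on_mult_right) blast
    have g1: "g absolutely_integrable_on {\<epsilon>..}"
    proof (rule abs_int_bound[OF _ _ mkI])
      show "continuous_on {\<epsilon>..} g" unfolding g_def using e a
        by (intro continuous_intros continuous_on_compose2[OF fc] kernel_cont) auto
      show "norm (g y) \<le> B / \<epsilon> * mk a y" if "y \<in> {\<epsilon>..}" for y
        using bnd[OF that] unfolding g_def by simp
    qed auto
    have g2: "(\<lambda>y. g (-y)) absolutely_integrable_on {\<epsilon>..}"
    proof (rule abs_int_bound[OF _ _ mkI])
      show "continuous_on {\<epsilon>..} (\<lambda>y. g (-y))" unfolding g_def using e a
        by (intro continuous_intros continuous_on_compose2[OF fc] continuous_on_compose2[OF kernel_cont[of "{..-\<epsilon>}"]]) auto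
      show "norm (g (-y)) \<le> B / \<epsilon> * mk a y" if "y \<in> {\<epsilon>..}" for y
        using bnd[OF that, of "x + y"] unfolding g_def by (simp add: kernel_neg)
    qed auto
    have refl: "g absolutely_integrable_on {..-\<epsilon>} \<and> integral {..-\<epsilon>} g = integral {\<epsilon>..} (\<lambda>y. g (-y))"
      using has_absolute_integral_reflect_real[of "{\<epsilon>..}" "{..-\<epsilon>}" g "integral {\<epsilon>..} (\<lambda>y. g (-y))"] g2
      by auto
    have set_eq: "{y. \<epsilon> \<le> \<bar>y\<bar>} = {\<epsilon>..} \<union> {..-\<epsilon>}" by auto
    have ne: "negligible ({\<epsilon>..} \<inter> {..-\<epsilon>})"
    proof -
      have "{\<epsilon>..} \<inter> {..-\<epsilon>} = ({}::real set)" using e by auto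
      then show ?thesis by (metis negligible_empty)
    qed
    have "integral {y. \<epsilon> \<le> \<bar>y\<bar>} g = integral {\<epsilon>..} g + integral {..-\<epsilon>} g"
      unfolding set_eq
      by (rule integral_Un) (use g1 refl ne in \<open>auto simp: absolutely_integrable_on_def\<close>)
    also have "\<dots> = integral {\<epsilon>..} g + integral {\<epsilon>..} (\<lambda>y. g (-y))" using refl by simp
    also have "\<dots> = integral {\<epsilon>..} (\<lambda>y. g y + g (-y))"
      by (rule integral_add[symmetric]) (use g1 g2 in \<open>auto simp: absolutely_integrable_on_def\<close>)
    also have "\<dots> = integral {\<epsilon>..} (Qf a f x)"
      unfolding g_def Qf_def by (simp add: kernel_neg algebra_simps)
    finally show ?thesis .
  qed
  have D: "\<bar>integral {\<epsilon>..} (Qf a f x) - I\<bar> \<le> 2 * L * \<epsilon> / pi" if e: "\<epsilon> > 0" for \<epsilon>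
  proof -
    have "\<bar>f 1 - f 0\<bar> \<le> L" using L[of 1 0] by simp
    then have L0: "L \<ge> 0" by (meson abs_ge_zero order_trans)
    have c1: "(\<lambda>_. 2 * L / pi) integrable_on {0<..<\<epsilon>}"
      using integrable_const_ivl[of "2 * L / pi" 0 \<epsilon>] has_integral_Icc_iff_Ioo
      by (metis integrable_on_def)
    have bndc: "norm (Qf a f x y) \<le> 2 * L / pi" if "y \<in> {0<..<\<epsilon>}" for y
    proof -
      have "norm (Qf a f x y) \<le> 2 * L * mk a y" using Q_bound[OF L] that by simp
      also have "\<dots> \<le> 2 * L * (1 / pi)" using mk_le[of a y] a L0 by (intro mult_left_mono) auto
      finally show ?thesis by simp
    qed
    have q1: "Qf a f x absolutely_integrable_on {0<..<\<epsilon>}"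
    proof (rule abs_int_bound[OF _ _ c1])
      show "continuous_on {0<..<\<epsilon>} (Qf a f x)" using a fc by (intro Q_cont) auto
    qed (use bndc in auto)
    have q2: "Qf a f x absolutely_integrable_on {\<epsilon>..}"
    proof (rule abs_int_bound)
      show "continuous_on {\<epsilon>..} (Qf a f x)" using a fc e by (intro Q_cont) auto
      show "(\<lambda>y. 2 * L * mk a y) integrable_on {\<epsilon>..}"
        using mk_integrable_atLeast[OF a] by (intro integrable_on_mult_right) blast
      show "norm (Qf a f x y) \<le> 2 * L * mk a y" if "y \<in> {\<epsilon>..}" for y
        using Q_bound[OF L] that e by simp
    qed auto
    have se: "{0<..} = {0<..<\<epsilon>} \<union> {\<epsilon>..}" using e by auto
    have "{0<..<\<epsilon>} \<inter> {\<epsilon>..} = ({}::real set)" by auto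
    then have ne: "negligible ({0<..<\<epsilon>} \<inter> {\<epsilon>..})" by (metis negligible_empty)
    have h1: "I = integral {0<..<\<epsilon>} (Qf a f x) + integral {\<epsilon>..} (Qf a f x)"
      unfolding I_def se using q1 q2 ne by (intro integral_Un) (auto simp: absolutely_integrable_on_def)
    have h2: "\<bar>integral {0<..<\<epsilon>} (Qf a f x)\<bar> \<le> integral {0<..<\<epsilon>} (\<lambda>_. 2 * L / pi)"
      using integral_norm_bound_integral[OF _ c1 bndc] q1
      by (simp add: absolutely_integrable_on_def)
    have h3: "integral {0<..<\<epsilon>} (\<lambda>_. 2 * L / pi) = 2 * L * \<epsilon> / pi"
      using e by (simp flip: integral_open_interval_real)
    from h1 h2 h3 show ?thesis by linarith
  qed
  have lim: "((\<lambda>\<epsilon>. integral {y. \<epsilon> \<le> \<bar>y\<bar>} g) \<longlongrightarrow> I) (at_right 0)"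
  proof -
    have "((\<lambda>\<epsilon>. integral {y. \<epsilon> \<le> \<bar>y\<bar>} g - I) \<longlongrightarrow> 0) (at_right 0)"
    proof (rule Lim_null_comparison)
      show "\<forall>\<^sub>F \<epsilon> in at_right 0. norm (integral {y. \<epsilon> \<le> \<bar>y\<bar>} g - I) \<le> 2 * L * \<epsilon> / pi"
        using eventually_at_right_less[of 0] by eventually_elim (use E D in auto)
      have "((\<lambda>\<epsilon>. 2 * L * \<epsilon> / pi) \<longlongrightarrow> 2 * L * 0 / pi) (at_right 0)"
        by (intro tendsto_intros) simp
      then show "((\<lambda>\<epsilon>. 2 * L * \<epsilon> / pi) \<longlongrightarrow> 0) (at_right 0)" by simp
    qed
    then show ?thesis by (simp add: LIM_zero_iff)
  qed
  show ?thesis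
    unfolding hilbert_a_def I_def[symmetric] g_def[symmetric]
    by (rule tendsto_Lim[OF _ lim]) simp
qed



lemma eventually_in_J:
  assumes "y > (0::real)"
  shows "\<forall>\<^sub>F n in sequentially. y \<in> {1 / real (Suc n) .. real (Suc n)}"
proof -
  obtain N :: nat where N: "real N \<ge> max y (1/y)" using real_arch_simple by blast
  show ?thesis
  proof (rule eventually_sequentiallyI[of N])
    fix n assume "N \<le> n"
    then have n: "real (Suc n) \<ge> max y (1/y)" using N by linarith
    then have "y \<le> real (Suc n)" by simp
    moreover have "1 / y \<le> real (Suc n)" using n by simp
    then have "1 \<le> real (Suc n) * y" using assms by (simp add: divide_le_eq mult.commute)
    then have "1 / real (Suc n) \<le> y" by (simp add: divide_le_eq mult.commute)
    ultimately show "y \<in> {1 / real (Suc n) .. real (Suc n)}" by simp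
  qed
qed

lemma G:
  assumes a: "a > 0" and fc: "continuous_on UNIV f" and L: "\<And>s t. \<bar>f s - f t\<bar> \<le> L * \<bar>s - t\<bar>"
    and uc: "continuous_on {-pi..pi} u"
    and Phi: "\<And>y. y > 0 \<Longrightarrow> \<bar>integral {-pi..pi} (\<lambda>x. u x * (f (x - y) - f (x + y)))\<bar> \<le> N * y"
  shows "(\<lambda>x. u x * integral {0<..} (Qf a f x)) integrable_on {-pi..pi}"
    and "\<bar>integral {-pi..pi} (\<lambda>x. u x * integral {0<..} (Qf a f x))\<bar> \<le> N * a / 2"
proof -
  define J where "J = (\<lambda>n::nat. {1 / real (Suc n) .. real (Suc n)})"
  define H where "H = (\<lambda>n x. integral (J n) (Qf a f x))"
  have J0: "0 \<notin> J n" for n unfolding J_def by simp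
  have Jpos: "y \<in> J n \<Longrightarrow> y > 0" for n y unfolding J_def
    by (auto intro: less_le_trans[of 0 "1 / real (Suc n)"])
  have Jle: "1 / real (Suc n) \<le> real (Suc n)" for n
  proof -
    have "1 / real (Suc n) \<le> 1" by simp
    moreover have "1 \<le> real (Suc n)" by simp
    ultimately show ?thesis by linarith
  qed
  have "\<bar>f 1 - f 0\<bar> \<le> L" using L[of 1 0] by simp
  then have L0: "L \<ge> 0" by (meson abs_ge_zero order_trans)
  have "\<bar>integral {-pi..pi} (\<lambda>x. u x * (f (x - 1) - f (x + 1)))\<bar> \<le> N" using Phi[of 1] by simp
  then have N0: "N \<ge> 0" by (meson abs_ge_zero order_trans)
  have Qc2: "continuous_on (UNIV \<times> J n) (\<lambda>(x, y). Qf a f x y)" for n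
    using Q_cont2[OF fc _ J0] a by simp
  have QJint: "Qf a f x integrable_on J n" for n x
  proof -
    have "continuous_on (J n) (Qf a f x)" using Q_cont[OF fc _ J0[of n]] a by simp
    then show ?thesis unfolding J_def by (rule integrable_continuous_interval)
  qed
  have mkJ: "mk a integrable_on J n" for n
    unfolding J_def using a by (intro integrable_continuous_interval continuous_intros) auto
  have Hb: "\<bar>H n x\<bar> \<le> L * a" for n x
  proof -
    have "norm (H n x) \<le> integral (J n) (\<lambda>y. 2 * L * mk a y)"
      unfolding H_def
      by (rule integral_norm_bound_integral[OF QJint integrable_on_mult_right[OF mkJ]])
         (use Q_bound[OF L] Jpos in auto)
    then have "\<bar>H n x\<bar> \<le> integral (J n) (\<lambda>y. 2 * L * mk a y)" by simp
    also have "\<dots> = 2 * L * integral (J n) (mk a)" by simp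
    also have "\<dots> \<le> 2 * L * (a / 2)"
      using L0 mk_integral_le[OF a _ Jle] unfolding J_def by (intro mult_left_mono) auto
    finally show ?thesis by simp
  qed
  have Hconv: "(\<lambda>n. H n x) \<longlonglongrightarrow> integral {0<..} (Qf a f x)" for x
  proof -
    define fn where "fn = (\<lambda>n y. if y \<in> J n then Qf a f x y else 0)"
    have "(\<lambda>n. integral {0<..} (fn n)) \<longlonglongrightarrow> integral {0<..} (Qf a f x)"
    proof (rule dominated_convergence(2))
      show "fn n integrable_on {0<..}" for n
        unfolding fn_def integrable_restrict_Int using QJint[where x=x and n=n] Jpos
        by (metis Int_absorb2 greaterThan_iff subsetI)
      show "(\<lambda>y. 2 * L * mk a y) integrable_on {0<..}"
        using mk_has_integral_pos[OF a] by (intro integrable_on_mult_right) blast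
      show "norm (fn n y) \<le> 2 * L * mk a y" if "y \<in> {0<..}" for n y
        unfolding fn_def using Q_bound[OF L, of y a x] that L0 mk_nonneg[of a y] by auto
      show "(\<lambda>n. fn n y) \<longlonglongrightarrow> Qf a f x y" if "y \<in> {0<..}" for y
      proof -
        have y0: "y > 0" using that by simp
        have ev: "\<forall>\<^sub>F n in sequentially. y \<in> J n" using eventually_in_J[OF y0] unfolding J_def .
        have "\<forall>\<^sub>F n in sequentially. fn n y = Qf a f x y"
          using ev by (rule eventually_mono) (simp add: fn_def)
        then show ?thesis by (rule tendsto_eventually)
      qed
    qed
    moreover have "integral {0<..} (fn n) = H n x" for n
      unfolding fn_def H_def integral_restrict_Int using Jpos
      by (metis Int_absorb2 greaterThan_iff subsetI)
    ultimately show ?thesis by simp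
  qed
  obtain Mu where Mu: "\<And>x. x \<in> {-pi..pi} \<Longrightarrow> \<bar>u x\<bar> \<le> Mu"
    using compact_imp_bounded[OF compact_continuous_image[OF uc compact_Icc]]
    unfolding bounded_iff by (metis atLeastAtMost_iff image_eqI real_norm_def)
  have Hc: "continuous_on {-pi..pi} (H n)" for n
  proof -
    have "continuous_on ({-pi..pi} \<times> cbox (1 / real (Suc n)) (real (Suc n))) (\<lambda>(x, y). Qf a f x y)"
      using Qc2[of n] unfolding J_def by (rule continuous_on_subset) auto
    from integral_continuous_on_param[OF this] show ?thesis
      unfolding H_def J_def by simp
  qed
  have fnint: "(\<lambda>x. u x * H n x) integrable_on {-pi..pi}" for n
    using continuous_on_mult[OF uc Hc[of n]] by (rule integrable_continuous_interval)
  have hint: "(\<lambda>x. Mu * (L * a)) integrable_on {-pi..pi}" by (rule integrable_const_ivl)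
  have hle: "norm (u x * H n x) \<le> Mu * (L * a)" if "x \<in> {-pi..pi}" for n x
    using Mu[OF that] Hb[where x=x and n=n] by (simp add: abs_mult mult_mono)
  have hconv: "(\<lambda>n. u x * H n x) \<longlonglongrightarrow> u x * integral {0<..} (Qf a f x)" for x
    by (intro tendsto_intros Hconv)
  note DC = dominated_convergence[where f="\<lambda>n x. u x * H n x" and h="\<lambda>x. Mu * (L * a)",
     OF fnint hint hle hconv]
  then show "(\<lambda>x. u x * integral {0<..} (Qf a f x)) integrable_on {-pi..pi}" by blast
  have bound_n: "\<bar>integral {-pi..pi} (\<lambda>x. u x * H n x)\<bar> \<le> N * a / 2" for n
  proof -
    have cont2: "continuous_on (cbox (-pi, 1 / real (Suc n)) (pi, real (Suc n))) (\<lambda>(x, y). u x * Qf a f x y)"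
    proof -
      have "continuous_on ({-pi..pi} \<times> J n) (\<lambda>p. u (fst p) * (\<lambda>(x, y). Qf a f x y) p)"
        by (intro continuous_intros continuous_on_compose2[OF uc] continuous_on_subset[OF Qc2[of n]]) auto
      then show ?thesis unfolding J_def by (simp add: cbox_Pair_eq case_prod_beta)
    qed
    have "integral {-pi..pi} (\<lambda>x. u x * H n x) = integral {-pi..pi} (\<lambda>x. integral (J n) (\<lambda>y. u x * Qf a f x y))"
      unfolding H_def by simp
    also have "\<dots> = integral (J n) (\<lambda>y. integral {-pi..pi} (\<lambda>x. u x * Qf a f x y))"
      using integral_swap_continuous[OF cont2] unfolding J_def by simp
    also have "\<dots> = integral (J n) (\<lambda>y. integral {-pi..pi} (\<lambda>x. u x * (f (x - y) - f (x + y))) * kernel_a a y)"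
      unfolding Qf_def by (simp add: integral_mult_left[symmetric] mult.assoc)
    finally have eq: "integral {-pi..pi} (\<lambda>x. u x * H n x) = \<dots>" .
    have c3: "continuous_on (J n) (\<lambda>y. integral {-pi..pi} (\<lambda>x. u x * Qf a f x y))"
    proof -
      have "continuous_on (J n \<times> cbox (-pi) pi) (\<lambda>(y, x). u x * Qf a f x y)"
      proof -
        have "continuous_on (J n \<times> {-pi..pi}) (\<lambda>p. u (snd p) * (\<lambda>(x, y). Qf a f x y) (snd p, fst p))"
          by (intro continuous_intros continuous_on_compose2[OF uc] continuous_on_compose2[OF Qc2[of n]]) auto
        then show ?thesis by (simp add: case_prod_beta)
      qed
      from integral_continuous_on_param[OF this] show ?thesis by simp
    qed
    have int3: "(\<lambda>y. integral {-pi..pi} (\<lambda>x. u x * (f (x - y) - f (x + y))) * kernel_a a y) integrable_on J n"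
    proof -
      have "(\<lambda>y. integral {-pi..pi} (\<lambda>x. u x * Qf a f x y)) integrable_on J n"
        using c3 unfolding J_def by (intro integrable_continuous_interval) auto
      then show ?thesis unfolding Qf_def by (simp add: integral_mult_left[symmetric] mult.assoc)
    qed
    have "\<bar>integral (J n) (\<lambda>y. integral {-pi..pi} (\<lambda>x. u x * (f (x - y) - f (x + y))) * kernel_a a y)\<bar>
        \<le> integral (J n) (\<lambda>y. N * mk a y)"
    proof (rule integral_norm_bound_integral[OF int3 integrable_on_mult_right[OF mkJ], unfolded real_norm_def])
      fix y assume y: "y \<in> J n"
      then have yp: "y > 0" by (rule Jpos)
      have "\<bar>integral {-pi..pi} (\<lambda>x. u x * (f (x - y) - f (x + y))) * kernel_a a y\<bar>
          = \<bar>integral {-pi..pi} (\<lambda>x. u x * (f (x - y) - f (x + y)))\<bar> * kernel_a a y"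
        using kernel_nonneg[OF yp] by (simp add: abs_mult)
      also have "\<dots> \<le> (N * y) * kernel_a a y"
        using Phi[OF yp] kernel_nonneg[OF yp] by (rule mult_right_mono)
      also have "\<dots> = N * mk a y" using yp by (simp add: kernel_mk)
      finally show "\<bar>integral {-pi..pi} (\<lambda>x. u x * (f (x - y) - f (x + y))) * kernel_a a y\<bar> \<le> N * mk a y" .
    qed
    also have "\<dots> = N * integral (J n) (mk a)" by simp
    also have "\<dots> \<le> N * (a / 2)"
      using N0 mk_integral_le[OF a _ Jle] unfolding J_def by (intro mult_left_mono) auto
    finally show ?thesis using eq by simp
  qed
  have "(\<lambda>n. \<bar>integral {-pi..pi} (\<lambda>x. u x * H n x)\<bar>) \<longlonglongrightarrow> \<bar>integral {-pi..pi} (\<lambda>x. u x * integral {0<..} (Qf a f x))\<bar>"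
    using DC by (intro tendsto_rabs) blast
  then show "\<bar>integral {-pi..pi} (\<lambda>x. u x * integral {0<..} (Qf a f x))\<bar> \<le> N * a / 2"
    by (rule tendsto_upperbound) (use bound_n in auto)
qed



lemma sp_deriv:
  assumes "smooth_periodic f"
  shows "((deriv ^^ k) f has_real_derivative (deriv ^^ Suc k) f x) (at x)"
proof -
  have "(deriv ^^ k) f differentiable (at x)" using assms unfolding smooth_periodic_def by blast
  then show ?thesis by (simp add: DERIV_deriv_iff_real_differentiable)
qed

lemma sp_cont:
  assumes "smooth_periodic f"
  shows "continuous_on S ((deriv ^^ k) f)"
  using sp_deriv[OF assms] by (meson DERIV_isCont continuous_at_imp_continuous_on)

lemma sp_bound:
  assumes "smooth_periodic f"
  obtains B where "\<And>x. \<bar>(deriv ^^ k) f x\<bar> \<le> B"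
proof -
  have "bounded (range ((deriv ^^ k) f))" using assms unfolding smooth_periodic_def by blast
  then obtain B where "\<forall>y\<in>range ((deriv ^^ k) f). norm y \<le> B" unfolding bounded_iff by blast
  then show ?thesis using that by auto
qed

lemma per_nat:
  assumes "\<And>x. g (x + T) = g x"
  shows "g (x + real n * T) = g x"
proof (induction n)
  case (Suc n)
  have "g (x + real (Suc n) * T) = g ((x + real n * T) + T)" by (simp add: algebra_simps)
  also have "\<dots> = g (x + real n * T)" by (rule assms)
  finally show ?case using Suc by simp
qed simp

lemma per_int:
  assumes "\<And>x. g (x + T) = g x"
  shows "g (x + real_of_int k * T) = g x"
proof (cases "k \<ge> 0")
  case True
  then obtain n where "k = int n" by (metis nonneg_eq_int)
  then show ?thesis using per_nat[of g T, OF assms] by simp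
next
  case False
  define n where "n = nat (-k)"
  have k: "k = - int n" using False unfolding n_def by simp
  have "g x = g ((x - real n * T) + real n * T)" by simp
  also have "\<dots> = g (x - real n * T)" by (rule per_nat[of g T, OF assms])
  finally show ?thesis using k by simp
qed

lemma sp_periodic:
  assumes "smooth_periodic f"
  shows "(deriv ^^ k) f (x + 2 * pi) = (deriv ^^ k) f x"
proof (induction k arbitrary: x)
  case 0
  then show ?case using assms unfolding smooth_periodic_def by simp
next
  case (Suc k)
  define g where "g = (deriv ^^ k) f"
  have gp: "(\<lambda>z. g (z + 2 * pi)) = g" using Suc unfolding g_def by auto
  have "(g has_real_derivative (deriv ^^ Suc k) f (x + 2 * pi)) (at (x + 2 * pi))"
    using sp_deriv[OF assms] unfolding g_def by blast
  then have "((\<lambda>z. g (z + 2 * pi)) has_real_derivative (deriv ^^ Suc k) f (x + 2 * pi)) (at x)"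
    by (simp add: DERIV_shift)
  then have "(g has_real_derivative (deriv ^^ Suc k) f (x + 2 * pi)) (at x)"
    unfolding gp .
  moreover have "(g has_real_derivative (deriv ^^ Suc k) f x) (at x)"
    using sp_deriv[OF assms] unfolding g_def by blast
  ultimately show ?case using DERIV_unique by blast
qed

lemma lipschitz_deriv:
  assumes "\<And>x. (g has_real_derivative g' x) (at x)" "\<And>x. \<bar>g' x\<bar> \<le> M"
  shows "\<bar>g s - g t\<bar> \<le> M * \<bar>s - t\<bar>"
proof -
  have main: "\<bar>g b - g a\<bar> \<le> M * (b - a)" if ab: "a < b" for a b
  proof -
    obtain z where "g b - g a = (b - a) * g' z"
      using MVT2[OF ab, of g g'] assms(1) by blast
    then have "\<bar>g b - g a\<bar> = (b - a) * \<bar>g' z\<bar>" using ab by (simp add: abs_mult)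
    also have "\<dots> \<le> (b - a) * M" using ab assms(2)[of z] by (intro mult_left_mono) auto
    finally show ?thesis by (simp add: mult.commute)
  qed
  consider "s < t" | "s = t" | "t < s" by linarith
  then show ?thesis
  proof cases
    case 1 then show ?thesis using main[OF 1] by (simp add: abs_minus_commute)
  next
    case 2 then show ?thesis by simp
  next
    case 3 then show ?thesis using main[OF 3] by simp
  qed
qed

lemma shift_integral:
  fixes p :: "real \<Rightarrow> real"
  assumes pc: "continuous_on UNIV p" and pp: "\<And>x. p (x + 2 * pi) = p x"
  shows "integral {-pi..pi} (\<lambda>x. p (x + c)) = integral {-pi..pi} p"
proof -
  define H where "H = (\<lambda>c. integral {-pi + c..pi + c} p)"
  have Hs: "integral {-pi..pi} (\<lambda>x. p (x + c)) = H c" for c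
    using integral_shift_real_ivl[of "-pi + c" c "pi + c" p] unfolding H_def by simp
  have int: "p integrable_on {u..v}" for u v
    by (intro integrable_continuous_interval continuous_on_subset[OF pc]) auto
  have Hper: "H (c + 2 * pi) = H c" for c
  proof -
    have "H (c + 2 * pi) = integral {(-pi + c + 2 * pi) - 2 * pi..(pi + c + 2 * pi) - 2 * pi} (\<lambda>x. p (x + 2 * pi))"
      unfolding H_def using integral_shift_real_ivl[of "-pi + c + 2 * pi" "2 * pi" "pi + c + 2 * pi" p]
      by (simp add: algebra_simps)
    also have "\<dots> = H c" unfolding H_def pp by simp
    finally show ?thesis .
  qed
  have H01: "H c = H 0" if "0 \<le> c" "c \<le> 2 * pi" for c
  proof -
    have "H c = integral {-pi + c..pi} p + integral {pi..pi + c} p"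
      unfolding H_def using Henstock_Kurzweil_Integration.integral_combine[where a="-pi+c" and c=pi and b="pi+c" and f=p] that int by simp
    moreover have "integral {pi..pi + c} p = integral {-pi..-pi + c} p"
    proof -
      have "integral {pi..pi + c} p = integral {pi - 2 * pi..(pi + c) - 2 * pi} (\<lambda>x. p (x + 2 * pi))"
        using integral_shift_real_ivl[of pi "2 * pi" "pi + c" p] by simp
      also have "\<dots> = integral {-pi..-pi + c} p" unfolding pp by (simp add: algebra_simps)
      finally show ?thesis .
    qed
    moreover have "H 0 = integral {-pi..-pi + c} p + integral {-pi + c..pi} p"
      unfolding H_def using Henstock_Kurzweil_Integration.integral_combine[where a="-pi" and c="-pi+c" and b=pi and f=p] that int by simp
    ultimately show ?thesis by simp
  qed
  define k where "k = floor (c / (2 * pi))"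
  define c' where "c' = c - real_of_int k * (2 * pi)"
  have "real_of_int k \<le> c / (2 * pi)" "c / (2 * pi) < real_of_int k + 1"
    unfolding k_def by linarith+
  then have c'b: "0 \<le> c'" "c' \<le> 2 * pi"
    unfolding c'_def by (simp_all add: field_simps)
  have "H c = H (c' + real_of_int k * (2 * pi))" unfolding c'_def by simp
  also have "\<dots> = H c'" by (rule per_int[of H "2 * pi", OF Hper])
  also have "\<dots> = H 0" using H01 c'b by blast
  finally show ?thesis using Hs[of c] Hs[of 0] by simp
qed



lemma cont_swap:
  assumes "continuous_on (UNIV \<times> S) (\<lambda>(x, t). F x t)"
  shows "continuous_on (S \<times> A) (\<lambda>(t, x). F x t)"
proof -
  have "continuous_on (S \<times> A) (\<lambda>p. (\<lambda>(x, t). F x t) (snd p, fst p))"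
    by (rule continuous_on_compose2[OF assms]) (auto intro!: continuous_intros)
  then show ?thesis by (simp add: case_prod_beta)
qed

lemma periodic_reduce:
  assumes "\<And>x. h (x + 2 * pi) = h x"
  obtains x' where "x' \<in> {-pi..pi}" "h x = h x'"
proof -
  define k where "k = floor ((x + pi) / (2 * pi))"
  define x' where "x' = x + real_of_int (-k) * (2 * pi)"
  have "real_of_int k \<le> (x + pi) / (2 * pi)" "(x + pi) / (2 * pi) < real_of_int k + 1"
    unfolding k_def by linarith+
  then have "-pi \<le> x'" "x' \<le> pi" unfolding x'_def by (simp_all add: field_simps)
  moreover have "h x' = h x" unfolding x'_def by (rule per_int[of h "2 * pi", OF assms])
  ultimately show ?thesis using that by auto
qed

lemma unif_bound:
  fixes F :: "real \<Rightarrow> real \<Rightarrow> real" and T t0 :: real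
  assumes c: "continuous_on (UNIV \<times> {0..<T}) (\<lambda>(x, t). F x t)"
    and p: "\<And>t x. t \<in> {0..<T} \<Longrightarrow> F (x + 2 * pi) t = F x t"
    and t0: "t0 \<in> {0..<T}"
  obtains M where "\<And>t x. t \<in> {0..t0} \<Longrightarrow> \<bar>F x t\<bar> \<le> M"
proof -
  have "compact ({-pi..pi} \<times> {0..t0})" by (intro compact_Times compact_Icc)
  moreover have "continuous_on ({-pi..pi} \<times> {0..t0}) (\<lambda>(x, t). F x t)"
    by (rule continuous_on_subset[OF c]) (use t0 in auto)
  ultimately have "bounded ((\<lambda>(x, t). F x t) ` ({-pi..pi} \<times> {0..t0}))"
    by (intro compact_imp_bounded compact_continuous_image)
  then obtain M where M: "\<forall>z \<in> (\<lambda>(x, t). F x t) ` ({-pi..pi} \<times> {0..t0}). norm z \<le> M"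
    unfolding bounded_iff by blast
  show ?thesis
  proof (rule that)
    fix t x assume t: "t \<in> {0..t0}"
    have tT: "t \<in> {0..<T}" using t t0 by auto
    obtain x' where x': "x' \<in> {-pi..pi}" "F x t = F x' t"
      using periodic_reduce[of "\<lambda>x. F x t"] p[OF tT] by blast
    have "(x', t) \<in> {-pi..pi} \<times> {0..t0}" using x' t by auto
    then have "\<bar>F x' t\<bar> \<le> M" using M by force
    then show "\<bar>F x t\<bar> \<le> M" using x' by simp
  qed
qed

lemma amgm: "\<bar>a * b\<bar> \<le> (a\<^sup>2 + b\<^sup>2) / (2::real)"
proof -
  have "0 \<le> (\<bar>a\<bar> - \<bar>b\<bar>)\<^sup>2" by simp
  also have "(\<bar>a\<bar> - \<bar>b\<bar>)\<^sup>2 = a\<^sup>2 + b\<^sup>2 - 2 * \<bar>a * b\<bar>"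
    by (simp add: power2_diff abs_mult)
  finally have "2 * \<bar>a * b\<bar> \<le> a\<^sup>2 + b\<^sup>2" by linarith
  then show ?thesis by (simp add: field_simps)
qed

lemma intc: "continuous_on UNIV h \<Longrightarrow> (h::real\<Rightarrow>real) integrable_on {a..b}"
  by (rule integrable_continuous_interval, erule continuous_on_subset) simp

lemma deriv_cont: "(\<And>x. (w has_real_derivative w' x) (at x)) \<Longrightarrow> continuous_on S w"
  by (meson DERIV_isCont continuous_at_imp_continuous_on)

lemma shift_deriv:
  assumes "\<And>x. (r has_real_derivative r' x) (at x)"
  shows "((\<lambda>x. r (x + c)) has_real_derivative r' (x + c)) (at x)"
  using DERIV_shift[of r "r' (x + c)" x c] assms by simp

lemma phi1:
  fixes w w' r r' r'' :: "real \<Rightarrow> real"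
  assumes wd: "\<And>x. (w has_real_derivative w' x) (at x)" and w'c: "continuous_on UNIV w'"
    and wp: "\<And>x. w (x + 2 * pi) = w x"
    and rd: "\<And>x. (r has_real_derivative r' x) (at x)"
    and r'd: "\<And>x. (r' has_real_derivative r'' x) (at x)"
    and M: "\<And>x. \<bar>r'' x\<bar> \<le> M" and rp: "\<And>x. r (x + 2 * pi) = r x"
    and y: "y > 0"
  shows "\<bar>integral {-pi..pi} (\<lambda>x. (w x * w' x) * (r (x - y) - r (x + y)))\<bar>
           \<le> M * integral {-pi..pi} (\<lambda>x. (w x)\<^sup>2) * y"
proof -
  have wc: "continuous_on UNIV w" by (rule deriv_cont[OF wd])
  have rc: "continuous_on UNIV r" by (rule deriv_cont[OF rd])
  have r'c: "continuous_on UNIV r'" by (rule deriv_cont[OF r'd])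
  define A where "A = (\<lambda>x. (w x * w' x) * (r (x - y) - r (x + y)))"
  define B where "B = (\<lambda>x. (w x)\<^sup>2 / 2 * (r' (x - y) - r' (x + y)))"
  define F where "F = (\<lambda>x. (w x)\<^sup>2 / 2 * (r (x - y) - r (x + y)))"
  have d1: "((\<lambda>x. r (x - y)) has_real_derivative r' (x - y)) (at x)" for x
    using shift_deriv[OF rd, of "-y"] by simp
  have d2: "((\<lambda>x. r (x + y)) has_real_derivative r' (x + y)) (at x)" for x
    by (rule shift_deriv[OF rd])
  have Fd: "(F has_real_derivative A x + B x) (at x)" for x
  proof -
    have "((\<lambda>x. (w x)\<^sup>2 / 2 * (r (x - y) - r (x + y))) has_real_derivative
        (2 * w x * w' x) / 2 * (r (x - y) - r (x + y)) + (w x)\<^sup>2 / 2 * (r' (x - y) - r' (x + y))) (at x)"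
      by (auto intro!: derivative_eq_intros d1 d2 wd simp: field_simps power2_eq_square)
    then show ?thesis unfolding F_def A_def B_def by simp
  qed
  have "((\<lambda>x. A x + B x) has_integral F pi - F (-pi)) {-pi..pi}"
    by (rule fundamental_theorem_of_calculus)
       (auto intro: has_field_derivative_at_within[OF Fd] simp flip: has_real_derivative_iff_has_vector_derivative)
  moreover have "F pi = F (-pi)"
  proof -
    have "w pi = w (-pi)" using wp[of "-pi"] by simp
    moreover have "r (pi - y) = r (-pi - y)" using rp[of "-pi - y"] by simp
    moreover have "r (pi + y) = r (-pi + y)" using rp[of "-pi + y"] by (simp add: add.commute)
    ultimately show ?thesis unfolding F_def by simp
  qed
  ultimately have hi0: "((\<lambda>x. A x + B x) has_integral 0) {-pi..pi}" by simp
  have cr1: "continuous_on UNIV (\<lambda>x. r (x - y))"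
    by (rule continuous_on_compose2[OF rc]) (auto intro!: continuous_intros)
  have cr2: "continuous_on UNIV (\<lambda>x. r (x + y))"
    by (rule continuous_on_compose2[OF rc]) (auto intro!: continuous_intros)
  have cr3: "continuous_on UNIV (\<lambda>x. r' (x - y))"
    by (rule continuous_on_compose2[OF r'c]) (auto intro!: continuous_intros)
  have cr4: "continuous_on UNIV (\<lambda>x. r' (x + y))"
    by (rule continuous_on_compose2[OF r'c]) (auto intro!: continuous_intros)
  have Ai: "A integrable_on {-pi..pi}" unfolding A_def
    by (intro intc continuous_intros wc w'c cr1 cr2)
  have w2: "continuous_on UNIV (\<lambda>x. (w x)\<^sup>2 / 2)"
    using continuous_on_divide[OF continuous_on_power[OF wc] continuous_on_const[of UNIV 2]] by simp
  have Bi: "B integrable_on {-pi..pi}" unfolding B_def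
    by (rule intc[OF continuous_on_mult[OF w2 continuous_on_diff[OF cr3 cr4]]])
  have "integral {-pi..pi} (\<lambda>x. A x + B x) = 0" using hi0 by (rule integral_unique)
  moreover have "integral {-pi..pi} (\<lambda>x. A x + B x) = integral {-pi..pi} A + integral {-pi..pi} B"
    by (rule integral_add[OF Ai Bi])
  ultimately have AB: "integral {-pi..pi} A = - integral {-pi..pi} B" by linarith
  have Bb: "norm (B x) \<le> (w x)\<^sup>2 * (M * y)" for x
  proof -
    have "\<bar>r' (x - y) - r' (x + y)\<bar> \<le> M * \<bar>(x - y) - (x + y)\<bar>"
      by (rule lipschitz_deriv[OF r'd M])
    then have "\<bar>r' (x - y) - r' (x + y)\<bar> \<le> M * (2 * y)" using y by simp
    then have "(w x)\<^sup>2 / 2 * \<bar>r' (x - y) - r' (x + y)\<bar> \<le> (w x)\<^sup>2 / 2 * (M * (2 * y))"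
      by (intro mult_left_mono) auto
    then show ?thesis unfolding B_def by (simp add: abs_mult)
  qed
  have "\<bar>integral {-pi..pi} B\<bar> \<le> integral {-pi..pi} (\<lambda>x. (w x)\<^sup>2 * (M * y))"
    using integral_norm_bound_integral[OF Bi _ Bb] 
    by (simp add: intc continuous_intros wc)
  also have "\<dots> = M * integral {-pi..pi} (\<lambda>x. (w x)\<^sup>2) * y"
    by (simp add: integral_mult_left algebra_simps)
  finally show ?thesis using AB unfolding A_def by simp
qed

lemma phi2:
  fixes w b b' :: "real \<Rightarrow> real"
  assumes wc: "continuous_on UNIV w" and wp: "\<And>x. w (x + 2 * pi) = w x"
    and bd: "\<And>x. (b has_real_derivative b' x) (at x)"
    and M: "\<And>x. \<bar>b' x\<bar> \<le> M" and bp: "\<And>x. b (x + 2 * pi) = b x"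
    and y: "y > 0"
  shows "\<bar>integral {-pi..pi} (\<lambda>x. (w x * b x) * (w (x - y) - w (x + y)))\<bar>
           \<le> M * integral {-pi..pi} (\<lambda>x. (w x)\<^sup>2) * y"
proof -
  have bc: "continuous_on UNIV b" by (rule deriv_cont[OF bd])
  have c1: "continuous_on UNIV (\<lambda>x. w (x - y))"
    by (rule continuous_on_compose2[OF wc]) (auto intro!: continuous_intros)
  have c2: "continuous_on UNIV (\<lambda>x. w (x + y))"
    by (rule continuous_on_compose2[OF wc]) (auto intro!: continuous_intros)
  have c3: "continuous_on UNIV (\<lambda>x. b (x - y))"
    by (rule continuous_on_compose2[OF bc]) (auto intro!: continuous_intros)
  have s1: "integral {-pi..pi} (\<lambda>x. w (x - y) * b (x - y) * w x)
      = integral {-pi..pi} (\<lambda>x. w x * b x * w (x + y))"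
  proof -
    have "integral {-pi..pi} (\<lambda>x. (\<lambda>x. w x * b x * w (x + y)) (x + - y))
        = integral {-pi..pi} (\<lambda>x. w x * b x * w (x + y))"
    proof (rule shift_integral)
      show "continuous_on UNIV (\<lambda>x. w x * b x * w (x + y))"
        by (intro continuous_intros wc bc c2)
      show "w (x + 2 * pi) * b (x + 2 * pi) * w (x + 2 * pi + y) = w x * b x * w (x + y)" for x
        using wp[of x] bp[of x] wp[of "x + y"] by (simp add: ac_simps)
    qed
    then show ?thesis by simp
  qed
  have s2: "integral {-pi..pi} (\<lambda>x. (w (x - y))\<^sup>2) = integral {-pi..pi} (\<lambda>x. (w x)\<^sup>2)"
  proof -
    have "integral {-pi..pi} (\<lambda>x. (\<lambda>x. (w x)\<^sup>2) (x + - y)) = integral {-pi..pi} (\<lambda>x. (w x)\<^sup>2)"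
      by (rule shift_integral) (auto intro!: continuous_intros wc simp: wp)
    then show ?thesis by simp
  qed
  have "integral {-pi..pi} (\<lambda>x. (w x * b x) * (w (x - y) - w (x + y)))
      = integral {-pi..pi} (\<lambda>x. w x * b x * w (x - y)) - integral {-pi..pi} (\<lambda>x. w x * b x * w (x + y))"
    by (subst integral_diff[symmetric]) (auto intro!: intc continuous_intros wc bc c1 c2 simp: algebra_simps)
  also have "\<dots> = integral {-pi..pi} (\<lambda>x. w x * b x * w (x - y)) - integral {-pi..pi} (\<lambda>x. w (x - y) * b (x - y) * w x)"
    using s1 by simp
  also have "\<dots> = integral {-pi..pi} (\<lambda>x. w x * w (x - y) * (b x - b (x - y)))"
    by (subst integral_diff[symmetric]) (auto intro!: intc continuous_intros wc bc c1 c3 simp: algebra_simps)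
  finally have eq: "integral {-pi..pi} (\<lambda>x. (w x * b x) * (w (x - y) - w (x + y)))
      = integral {-pi..pi} (\<lambda>x. w x * w (x - y) * (b x - b (x - y)))" .
  have bnd: "norm (w x * w (x - y) * (b x - b (x - y))) \<le> ((w x)\<^sup>2 + (w (x - y))\<^sup>2) * (M * y / 2)" for x
  proof -
    have "\<bar>b x - b (x - y)\<bar> \<le> M * \<bar>x - (x - y)\<bar>" by (rule lipschitz_deriv[OF bd M])
    then have h1: "\<bar>b x - b (x - y)\<bar> \<le> M * y" using y by simp
    have h2: "\<bar>w x * w (x - y)\<bar> \<le> ((w x)\<^sup>2 + (w (x - y))\<^sup>2) / 2" by (rule amgm)
    have "\<bar>w x * w (x - y) * (b x - b (x - y))\<bar> = \<bar>w x * w (x - y)\<bar> * \<bar>b x - b (x - y)\<bar>"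
      by (simp add: abs_mult)
    also have "\<dots> \<le> ((w x)\<^sup>2 + (w (x - y))\<^sup>2) / 2 * (M * y)"
      by (intro mult_mono h1 h2) auto
    finally show ?thesis by simp
  qed
  have i1: "(\<lambda>x. w x * w (x - y) * (b x - b (x - y))) integrable_on {-pi..pi}"
    by (rule intc, intro continuous_on_mult continuous_on_diff wc bc c1 c3)
  have p1: "(\<lambda>x. (w x)\<^sup>2) integrable_on {-pi..pi}"
    by (rule intc, intro continuous_on_power wc)
  have p2: "(\<lambda>x. (w (x - y))\<^sup>2) integrable_on {-pi..pi}"
    by (rule intc, intro continuous_on_power c1)
  have i2: "(\<lambda>x. ((w x)\<^sup>2 + (w (x - y))\<^sup>2) * (M * y / 2)) integrable_on {-pi..pi}"
    by (rule integrable_on_mult_left[OF integrable_add[OF p1 p2]])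
  have "norm (integral {-pi..pi} (\<lambda>x. w x * w (x - y) * (b x - b (x - y))))
      \<le> integral {-pi..pi} (\<lambda>x. ((w x)\<^sup>2 + (w (x - y))\<^sup>2) * (M * y / 2))"
    by (rule integral_norm_bound_integral[OF i1 i2]) (rule bnd)
  also have "\<dots> = (integral {-pi..pi} (\<lambda>x. (w x)\<^sup>2) + integral {-pi..pi} (\<lambda>x. (w (x - y))\<^sup>2)) * (M * y / 2)"
    by (simp add: integral_mult_left integral_add[OF p1 p2])
  also have "\<dots> = M * integral {-pi..pi} (\<lambda>x. (w x)\<^sup>2) * y"
    using s2 by simp
  finally show ?thesis using eq by simp
qed

lemma gronwall0:
  fixes E E' :: "real \<Rightarrow> real"
  assumes t0: "t0 \<in> {0..<T}"
    and Ed: "\<And>t. t \<in> {0..<T} \<Longrightarrow> (E has_real_derivative E' t) (at t within {0..<T})"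
    and ineq: "\<And>t. t \<in> {0..t0} \<Longrightarrow> E' t \<le> C * E t"
    and nn: "\<And>t. t \<in> {0..t0} \<Longrightarrow> E t \<ge> 0"
    and E0: "E 0 = 0"
  shows "E t0 = 0"
proof (cases "t0 = 0")
  case True then show ?thesis using E0 by simp
next
  case False
  then have t0p: "0 < t0" using t0 by auto
  define \<phi> where "\<phi> = (\<lambda>t. E t * exp (- C * t))"
  have \<phi>d: "(\<phi> has_real_derivative (E' t - C * E t) * exp (- C * t)) (at t within {0..<T})"
    if "t \<in> {0..<T}" for t
    unfolding \<phi>_def
    by (rule derivative_eq_intros Ed[OF that] | simp add: algebra_simps)+
  have cont: "continuous_on {0..t0} \<phi>"
  proof -
    have "continuous (at t within {0..<T}) \<phi>" if "t \<in> {0..<T}" for t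
      using DERIV_continuous[OF \<phi>d[OF that]] .
    then have "continuous_on {0..<T} \<phi>" by (simp add: continuous_on_eq_continuous_within)
    then show ?thesis by (rule continuous_on_subset) (use t0 in auto)
  qed
  have dat: "(\<phi> has_real_derivative (E' t - C * E t) * exp (- C * t)) (at t)" if "0 < t" "t < t0" for t
  proof -
    have tT: "t \<in> {0..<T}" using that t0 by auto
    have "(\<phi> has_real_derivative (E' t - C * E t) * exp (- C * t)) (at t within {0<..<T})"
      by (rule DERIV_subset[OF \<phi>d[OF tT]]) auto
    moreover have "at t within {0<..<T} = at t" using that t0 by (intro at_within_open) auto
    ultimately show ?thesis by simp
  qed
  obtain l z where z: "0 < z" "z < t0" "(\<phi> has_real_derivative l) (at z)" "\<phi> t0 - \<phi> 0 = (t0 - 0) * l"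
    using MVT[OF t0p cont] dat by (metis real_differentiable_def)
  have "l = (E' z - C * E z) * exp (- C * z)"
    using DERIV_unique[OF z(3) dat[OF z(1,2)]] .
  moreover have "E' z - C * E z \<le> 0" using ineq[of z] z by auto
  ultimately have "l \<le> 0" by (simp add: mult_nonpos_nonneg)
  then have "t0 * l \<le> 0" using t0p by (simp add: mult_nonneg_nonpos)
  then have "\<phi> t0 \<le> \<phi> 0" using z(4) by simp
  then have "E t0 * exp (- C * t0) \<le> 0" unfolding \<phi>_def using E0 by simp
  then have "E t0 \<le> 0" by (simp add: mult_le_0_iff)
  then show ?thesis using nn[of t0] t0 by auto
qed

lemma zero_from_integral:
  fixes h :: "real \<Rightarrow> real"
  assumes hc: "continuous_on UNIV h" and hp: "\<And>x. h (x + 2 * pi) = h x"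
    and I: "integral {-pi..pi} (\<lambda>x. (h x)\<^sup>2) = 0"
  shows "h x = 0"
proof -
  have ci: "continuous_on (cbox (-pi) pi) (\<lambda>x. (h x)\<^sup>2)"
    using continuous_on_power[OF continuous_on_subset[OF hc]] by simp
  have "(\<lambda>x. (h x)\<^sup>2) integrable_on {-pi..pi}" by (rule intc[OF continuous_on_power[OF hc]])
  then have hi: "((\<lambda>x. (h x)\<^sup>2) has_integral 0) (cbox (-pi) pi)"
    using I by (simp add: has_integral_integrable_integral)
  have ne: "box (-pi) pi \<noteq> ({}::real set)" using pi_gt_zero by (simp add: box_real not_le)
  obtain x' where x': "x' \<in> {-pi..pi}" "h x = h x'" using periodic_reduce[of h x, OF hp] by blast
  have "(h x')\<^sup>2 = 0"
    by (rule has_integral_0_cbox_imp_0[OF ci _ hi ne]) (use x' in \<open>auto simp: box_real\<close>)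
  then show ?thesis using x' by simp
qed



lemma absint_int: "(f::real\<Rightarrow>real) absolutely_integrable_on S \<Longrightarrow> f integrable_on S"
  by (simp add: absolutely_integrable_on_def)

lemma energy_step:
  fixes f1 f2 v :: "real \<Rightarrow> real"
  assumes a: "a > 0" and g: "g > 0"
    and sp1: "smooth_periodic f1" and sp2: "smooth_periodic f2"
    and M1: "\<And>x. \<bar>(deriv ^^ 2) f1 x\<bar> \<le> M1" and M2: "\<And>x. \<bar>(deriv ^^ 2) f2 x\<bar> \<le> M2"
    and veq: "\<And>x. v x = - g * (hilbert_a a f1 x * deriv f1 x) + g * (hilbert_a a f2 x * deriv f2 x)"
  shows "integral {-pi..pi} (\<lambda>x. 2 * (f1 x - f2 x) * v x)
           \<le> g * a * (M1 + M2) * integral {-pi..pi} (\<lambda>x. (f1 x - f2 x)\<^sup>2)"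
proof -
  define w where "w = (\<lambda>x. f1 x - f2 x)"
  define E where "E = integral {-pi..pi} (\<lambda>x. (w x)\<^sup>2)"
  have f1d: "(f1 has_real_derivative deriv f1 x) (at x)" for x using sp_deriv[OF sp1, of 0 x] by simp
  have f2d: "(f2 has_real_derivative deriv f2 x) (at x)" for x using sp_deriv[OF sp2, of 0 x] by simp
  have d1d: "(deriv f1 has_real_derivative (deriv ^^ 2) f1 x) (at x)" for x
    using sp_deriv[OF sp1, of 1 x] by (simp add: numeral_2_eq_2)
  have d2d: "(deriv f2 has_real_derivative (deriv ^^ 2) f2 x) (at x)" for x
    using sp_deriv[OF sp2, of 1 x] by (simp add: numeral_2_eq_2)
  have f1p: "f1 (x + 2 * pi) = f1 x" for x using sp_periodic[OF sp1, of 0 x] by simp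
  have f2p: "f2 (x + 2 * pi) = f2 x" for x using sp_periodic[OF sp2, of 0 x] by simp
  have d2p: "deriv f2 (x + 2 * pi) = deriv f2 x" for x using sp_periodic[OF sp2, of 1 x] by simp
  obtain B1 where B1: "\<And>x. \<bar>f1 x\<bar> \<le> B1" using sp_bound[OF sp1, of 0] by auto
  obtain B2 where B2: "\<And>x. \<bar>f2 x\<bar> \<le> B2" using sp_bound[OF sp2, of 0] by auto
  obtain L1 where L1: "\<And>x. \<bar>deriv f1 x\<bar> \<le> L1" using sp_bound[OF sp1, of 1] by auto
  obtain L2 where L2: "\<And>x. \<bar>deriv f2 x\<bar> \<le> L2" using sp_bound[OF sp2, of 1] by auto
  have Lip1: "\<bar>f1 s - f1 t\<bar> \<le> L1 * \<bar>s - t\<bar>" for s t by (rule lipschitz_deriv[OF f1d L1])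
  have Lip2: "\<bar>f2 s - f2 t\<bar> \<le> L2 * \<bar>s - t\<bar>" for s t by (rule lipschitz_deriv[OF f2d L2])
  have wd: "(w has_real_derivative deriv f1 x - deriv f2 x) (at x)" for x
    unfolding w_def by (intro DERIV_diff f1d f2d)
  have wb: "\<bar>deriv f1 x - deriv f2 x\<bar> \<le> L1 + L2" for x
    using L1[of x] L2[of x] by linarith
  have Lipw: "\<bar>w s - w t\<bar> \<le> (L1 + L2) * \<bar>s - t\<bar>" for s t by (rule lipschitz_deriv[OF wd wb])
  have f1c: "continuous_on UNIV f1" by (rule deriv_cont[OF f1d])
  have f2c: "continuous_on UNIV f2" by (rule deriv_cont[OF f2d])
  have d1c: "continuous_on UNIV (deriv f1)" by (rule deriv_cont[OF d1d])
  have d2c: "continuous_on UNIV (deriv f2)" by (rule deriv_cont[OF d2d])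
  have wc: "continuous_on UNIV w" by (rule deriv_cont[OF wd])
  have w'c: "continuous_on UNIV (\<lambda>x. deriv f1 x - deriv f2 x)" by (intro continuous_on_diff d1c d2c)
  have wp: "w (x + 2 * pi) = w x" for x unfolding w_def using f1p f2p by simp
  define H1 where "H1 = (\<lambda>x. integral {0<..} (Qf a f1 x))"
  define Hw where "Hw = (\<lambda>x. integral {0<..} (Qf a w x))"
  have h1: "hilbert_a a f1 x = H1 x" for x unfolding H1_def by (rule hilbert_eq[OF a f1c B1 Lip1])
  have h2: "hilbert_a a f2 x = integral {0<..} (Qf a f2 x)" for x by (rule hilbert_eq[OF a f2c B2 Lip2])
  have hw: "hilbert_a a f1 x - hilbert_a a f2 x = Hw x" for x
  proof -
    have i1: "Qf a f1 x integrable_on {0<..}" by (rule absint_int[OF Q_absint[OF a f1c Lip1]])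
    have i2: "Qf a f2 x integrable_on {0<..}" by (rule absint_int[OF Q_absint[OF a f2c Lip2]])
    have "Hw x = integral {0<..} (\<lambda>y. Qf a f1 x y - Qf a f2 x y)"
      unfolding Hw_def w_def Qf_def by (simp add: algebra_simps)
    also have "\<dots> = integral {0<..} (Qf a f1 x) - integral {0<..} (Qf a f2 x)"
      by (rule integral_diff[OF i1 i2])
    finally show ?thesis using h1 h2 unfolding H1_def by simp
  qed
  define u1 where "u1 = (\<lambda>x. w x * (deriv f1 x - deriv f2 x))"
  define u2 where "u2 = (\<lambda>x. w x * deriv f2 x)"
  have u1c: "continuous_on {-pi..pi} u1" unfolding u1_def
    by (intro continuous_on_mult continuous_on_subset[OF wc] continuous_on_subset[OF w'c]) auto
  have u2c: "continuous_on {-pi..pi} u2" unfolding u2_def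
    by (intro continuous_on_mult continuous_on_subset[OF wc] continuous_on_subset[OF d2c]) auto
  have Phi1: "\<bar>integral {-pi..pi} (\<lambda>x. u1 x * (f1 (x - y) - f1 (x + y)))\<bar> \<le> (M1 * E) * y" if "y > 0" for y
    using phi1[OF wd w'c wp f1d d1d M1 f1p that] unfolding u1_def E_def by simp
  have Phi2: "\<bar>integral {-pi..pi} (\<lambda>x. u2 x * (w (x - y) - w (x + y)))\<bar> \<le> (M2 * E) * y" if "y > 0" for y
    using phi2[OF wc wp d2d M2 d2p that] unfolding u2_def E_def by simp
  note G1 = G[OF a f1c Lip1 u1c Phi1]
  note G2 = G[OF a wc Lipw u2c Phi2]
  define T1 where "T1 = integral {-pi..pi} (\<lambda>x. u1 x * H1 x)"
  define T2 where "T2 = integral {-pi..pi} (\<lambda>x. u2 x * Hw x)"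
  have int1: "(\<lambda>x. u1 x * H1 x) integrable_on {-pi..pi}" using G1(1) unfolding H1_def .
  have int2: "(\<lambda>x. u2 x * Hw x) integrable_on {-pi..pi}" using G2(1) unfolding Hw_def .
  have T1b: "\<bar>T1\<bar> \<le> M1 * E * a / 2" using G1(2) unfolding T1_def H1_def .
  have T2b: "\<bar>T2\<bar> \<le> M2 * E * a / 2" using G2(2) unfolding T2_def Hw_def .
  have pw: "2 * (f1 x - f2 x) * v x = (- 2 * g) * (u1 x * H1 x + u2 x * Hw x)" for x
  proof -
    have "2 * (f1 x - f2 x) * v x
        = (- 2 * g) * (w x * (hilbert_a a f1 x * (deriv f1 x - deriv f2 x) + (hilbert_a a f1 x - hilbert_a a f2 x) * deriv f2 x))"
      unfolding veq w_def by (simp add: algebra_simps)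
    also have "\<dots> = (- 2 * g) * (w x * (H1 x * (deriv f1 x - deriv f2 x) + Hw x * deriv f2 x))"
      unfolding hw unfolding h1 ..
    finally show ?thesis unfolding u1_def u2_def by (simp add: algebra_simps)
  qed
  have "integral {-pi..pi} (\<lambda>x. 2 * (f1 x - f2 x) * v x)
      = integral {-pi..pi} (\<lambda>x. (- 2 * g) * (u1 x * H1 x + u2 x * Hw x))"
    unfolding pw ..
  also have "\<dots> = (- 2 * g) * (T1 + T2)"
    unfolding T1_def T2_def by (simp add: integral_add[OF int1 int2])
  also have "\<dots> \<le> 2 * g * (\<bar>T1\<bar> + \<bar>T2\<bar>)"
  proof -
    have "- (T1 + T2) \<le> \<bar>T1\<bar> + \<bar>T2\<bar>"
      using abs_ge_minus_self[of T1] abs_ge_minus_self[of T2] by linarith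
    then have "(2 * g) * (- (T1 + T2)) \<le> (2 * g) * (\<bar>T1\<bar> + \<bar>T2\<bar>)"
      by (rule mult_left_mono) (use g in auto)
    then show ?thesis by (simp add: algebra_simps)
  qed
  also have "\<dots> \<le> 2 * g * (M1 * E * a / 2 + M2 * E * a / 2)"
    using g T1b T2b by (intro mult_left_mono) auto
  also have "\<dots> = g * a * (M1 + M2) * E" by (simp add: algebra_simps)
  finally show ?thesis unfolding E_def w_def .
qed



lemma sol_facts:
  assumes "is_solution a g T rho0 rho"
  obtains rt where
    "\<And>t. t \<in> {0..<T} \<Longrightarrow> smooth_periodic (\<lambda>x. rho x t)"
    "\<And>k. continuous_on (UNIV \<times> {0..<T}) (\<lambda>(x, t). (deriv ^^ k) (\<lambda>y. rho y t) x)"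
    "\<And>x. rho x 0 = rho0 x"
    "continuous_on (UNIV \<times> {0..<T}) (\<lambda>(x, t). rt x t)"
    "\<And>x t. t \<in> {0..<T} \<Longrightarrow> ((\<lambda>s. rho x s) has_real_derivative rt x t) (at t within {0..<T})"
    "\<And>x t. t \<in> {0..<T} \<Longrightarrow> rt x t + g * hilbert_a a (\<lambda>y. rho y t) x * deriv (\<lambda>y. rho y t) x = 0"
  using assms unfolding is_solution_def by metis

theorem lemma3p1:
  fixes a g T :: real and rho0 :: "real \<Rightarrow> real" and rho1 rho2 :: "real \<Rightarrow> real \<Rightarrow> real"
  assumes "a > 0" and "g > 0"
    and "smooth_periodic rho0"
    and "is_solution a g T rho0 rho1"
    and "is_solution a g T rho0 rho2"
  shows "\<forall>x. \<forall>t\<in>{0..<T}. rho1 x t = rho2 x t"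
proof (intro allI ballI)
  fix x0 t0 assume t0: "t0 \<in> {0..<T}"
  have a: "a > 0" and g: "g > 0" by fact+
  obtain r1 where sp1: "\<And>t. t \<in> {0..<T} \<Longrightarrow> smooth_periodic (\<lambda>x. rho1 x t)"
    and cc1: "\<And>k. continuous_on (UNIV \<times> {0..<T}) (\<lambda>(x, t). (deriv ^^ k) (\<lambda>y. rho1 y t) x)"
    and in1: "\<And>x. rho1 x 0 = rho0 x"
    and ct1: "continuous_on (UNIV \<times> {0..<T}) (\<lambda>(x, t). r1 x t)"
    and der1: "\<And>x t. t \<in> {0..<T} \<Longrightarrow> ((\<lambda>s. rho1 x s) has_real_derivative r1 x t) (at t within {0..<T})"
    and eq1: "\<And>x t. t \<in> {0..<T} \<Longrightarrow> r1 x t + g * hilbert_a a (\<lambda>y. rho1 y t) x * deriv (\<lambda>y. rho1 y t) x = 0"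
    using sol_facts[OF assms(4)] by blast
  obtain r2 where sp2: "\<And>t. t \<in> {0..<T} \<Longrightarrow> smooth_periodic (\<lambda>x. rho2 x t)"
    and cc2: "\<And>k. continuous_on (UNIV \<times> {0..<T}) (\<lambda>(x, t). (deriv ^^ k) (\<lambda>y. rho2 y t) x)"
    and in2: "\<And>x. rho2 x 0 = rho0 x"
    and ct2: "continuous_on (UNIV \<times> {0..<T}) (\<lambda>(x, t). r2 x t)"
    and der2: "\<And>x t. t \<in> {0..<T} \<Longrightarrow> ((\<lambda>s. rho2 x s) has_real_derivative r2 x t) (at t within {0..<T})"
    and eq2: "\<And>x t. t \<in> {0..<T} \<Longrightarrow> r2 x t + g * hilbert_a a (\<lambda>y. rho2 y t) x * deriv (\<lambda>y. rho2 y t) x = 0"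
    using sol_facts[OF assms(5)] by blast
  obtain M1 where M1: "\<And>t x. t \<in> {0..t0} \<Longrightarrow> \<bar>(deriv ^^ 2) (\<lambda>y. rho1 y t) x\<bar> \<le> M1"
    using unif_bound[OF cc1[of 2] _ t0] sp_periodic[OF sp1] by blast
  obtain M2 where M2: "\<And>t x. t \<in> {0..t0} \<Longrightarrow> \<bar>(deriv ^^ 2) (\<lambda>y. rho2 y t) x\<bar> \<le> M2"
    using unif_bound[OF cc2[of 2] _ t0] sp_periodic[OF sp2] by blast
  have c1: "continuous_on (UNIV \<times> {0..<T}) (\<lambda>(x, t). rho1 x t)" using cc1[of 0] by simp
  have c2: "continuous_on (UNIV \<times> {0..<T}) (\<lambda>(x, t). rho2 x t)" using cc2[of 0] by simp
  define E where "E = (\<lambda>t. integral {-pi..pi} (\<lambda>x. (rho1 x t - rho2 x t)\<^sup>2))"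
  define E' where "E' = (\<lambda>t. integral {-pi..pi} (\<lambda>x. 2 * (rho1 x t - rho2 x t) * (r1 x t - r2 x t)))"
  have Ed: "(E has_real_derivative E' t) (at t within {0..<T})" if t: "t \<in> {0..<T}" for t
  proof -
    have "((\<lambda>s. integral (cbox (-pi) pi) (\<lambda>x. (rho1 x s - rho2 x s)\<^sup>2)) has_field_derivative
        integral (cbox (-pi) pi) (\<lambda>x. 2 * (rho1 x t - rho2 x t) * (r1 x t - r2 x t))) (at t within {0..<T})"
    proof (rule leibniz_rule_field_derivative[where f = "\<lambda>s x. (rho1 x s - rho2 x s)\<^sup>2"
          and fx = "\<lambda>s x. 2 * (rho1 x s - rho2 x s) * (r1 x s - r2 x s)"])
      fix s x assume s: "s \<in> {0..<T}"
      show "((\<lambda>s. (rho1 x s - rho2 x s)\<^sup>2) has_field_derivative 2 * (rho1 x s - rho2 x s) * (r1 x s - r2 x s))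
          (at s within {0..<T})"
        by (rule derivative_eq_intros der1[OF s] der2[OF s] refl | simp)+
    next
      fix s assume s: "s \<in> {0..<T}"
      have "continuous_on UNIV (\<lambda>x. (rho1 x s - rho2 x s)\<^sup>2)"
        using sp_cont[OF sp1[OF s], of UNIV 0] sp_cont[OF sp2[OF s], of UNIV 0]
        by (intro continuous_on_power continuous_on_diff) auto
      then show "(\<lambda>x. (rho1 x s - rho2 x s)\<^sup>2) integrable_on cbox (-pi) pi"
        using intc by auto
    next
      have q1: "continuous_on ({0..<T} \<times> cbox (-pi) pi) (\<lambda>(t, x). rho1 x t)" by (rule cont_swap[OF c1])
      have q2: "continuous_on ({0..<T} \<times> cbox (-pi) pi) (\<lambda>(t, x). rho2 x t)" by (rule cont_swap[OF c2])
      have q3: "continuous_on ({0..<T} \<times> cbox (-pi) pi) (\<lambda>(t, x). r1 x t)" by (rule cont_swap[OF ct1])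
      have q4: "continuous_on ({0..<T} \<times> cbox (-pi) pi) (\<lambda>(t, x). r2 x t)" by (rule cont_swap[OF ct2])
      have "continuous_on ({0..<T} \<times> cbox (-pi) pi)
          (\<lambda>p. 2 * ((\<lambda>(t, x). rho1 x t) p - (\<lambda>(t, x). rho2 x t) p) * ((\<lambda>(t, x). r1 x t) p - (\<lambda>(t, x). r2 x t) p))"
        by (intro continuous_on_mult continuous_on_diff continuous_on_const q1 q2 q3 q4)
      then show "continuous_on ({0..<T} \<times> cbox (-pi) pi) (\<lambda>(s, x). 2 * (rho1 x s - rho2 x s) * (r1 x s - r2 x s))"
        by (simp add: case_prod_beta)
    qed (use t in auto)
    then show ?thesis unfolding E_def E'_def by simp
  qed
  define C where "C = g * a * (M1 + M2)"
  have ineq: "E' t \<le> C * E t" if t: "t \<in> {0..t0}" for t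
  proof -
    have tT: "t \<in> {0..<T}" using t t0 by auto
    have "integral {-pi..pi} (\<lambda>x. 2 * (rho1 x t - rho2 x t) * (r1 x t - r2 x t))
        \<le> g * a * (M1 + M2) * integral {-pi..pi} (\<lambda>x. (rho1 x t - rho2 x t)\<^sup>2)"
    proof (rule energy_step[OF a g sp1[OF tT] sp2[OF tT], where v = "\<lambda>x. r1 x t - r2 x t"])
      show "\<bar>(deriv ^^ 2) (\<lambda>y. rho1 y t) x\<bar> \<le> M1" for x by (rule M1[OF t])
      show "\<bar>(deriv ^^ 2) (\<lambda>y. rho2 y t) x\<bar> \<le> M2" for x by (rule M2[OF t])
      show "r1 x t - r2 x t = - g * (hilbert_a a (\<lambda>y. rho1 y t) x * deriv (\<lambda>y. rho1 y t) x)
          + g * (hilbert_a a (\<lambda>y. rho2 y t) x * deriv (\<lambda>y. rho2 y t) x)" for x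
        using eq1[OF tT, of x] eq2[OF tT, of x] by (simp add: algebra_simps)
    qed
    then show ?thesis unfolding E_def E'_def C_def .
  qed
  have nn: "E t \<ge> 0" if t: "t \<in> {0..t0}" for t
  proof -
    have tT: "t \<in> {0..<T}" using t t0 by auto
    have "continuous_on UNIV (\<lambda>x. (rho1 x t - rho2 x t)\<^sup>2)"
      using sp_cont[OF sp1[OF tT], of UNIV 0] sp_cont[OF sp2[OF tT], of UNIV 0]
      by (intro continuous_on_power continuous_on_diff) auto
    then have "(\<lambda>x. (rho1 x t - rho2 x t)\<^sup>2) integrable_on {-pi..pi}" by (rule intc)
    then show ?thesis unfolding E_def by (rule integral_nonneg) simp
  qed
  have E0: "E 0 = 0" unfolding E_def using in1 in2 by simp
  have "E t0 = 0" by (rule gronwall0[OF t0 Ed ineq nn E0])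
  show "rho1 x0 t0 = rho2 x0 t0"
  proof -
    have hc: "continuous_on UNIV (\<lambda>x. rho1 x t0 - rho2 x t0)"
      using sp_cont[OF sp1[OF t0], of UNIV 0] sp_cont[OF sp2[OF t0], of UNIV 0]
      by (intro continuous_on_diff) auto
    have hp: "rho1 (x + 2 * pi) t0 - rho2 (x + 2 * pi) t0 = rho1 x t0 - rho2 x t0" for x
      using sp_periodic[OF sp1[OF t0], of 0 x] sp_periodic[OF sp2[OF t0], of 0 x] by simp
    have "rho1 x0 t0 - rho2 x0 t0 = 0"
      by (rule zero_from_integral[where h = "\<lambda>x. rho1 x t0 - rho2 x t0", OF hc hp])
         (use \<open>E t0 = 0\<close> in \<open>simp add: E_def\<close>)
    then show ?thesis by simp
  qed
qed


end
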